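(* Let $d\ge 1$, $0<a<1/d$, and let $K:\mathbb{R}^d\to\mathbb{R}$ be bounded and integrable with $\int_{\mathbb{R}^d}K(z)\,dz=1$ and $K(z)\to 0$ as $\|z\|\to\infty$. Define $$\psi(u)=\int_{[0,1]\times\mathbb{R}^d}s^{-ad}\Big(e^{s^{ad}\frac{u}{1-ad}K(z)}-1\Big)\,ds\,dz,\qquad I(t)=\sup_{u\in\mathbb{R}}\{ut-\psi(u)\},$$ and $S_+=\{x: K(x)>0\}$, $S_-=\{x:K(x)<0\}$. Let $\lambda$ be Lebesgue measure on $\mathbb{R}^d$. Then: (i) $\psi$ is finite, strictly convex and twice continuously differentiable on $\mathbb{R}$, and $I$ is a good rate function on $\mathbb{R}$ (i.e. $I:\mathbb{R}\to[0,\infty]$ has compact level sets). (ii) If $\lambda(S_-)=0$, then $I(t)=+\infty$ for $t<0$, $I(0)=\lambda(S_+)/(1-ad)$, $I$ is strictly convex on $\mathbb{R}$ and continuous on $]0,+\infty[$, and for every $t>0$, $I(t)=t(\psi')^{-1}(t)-\psi\big((\psi')^{-1}(t)\big)$. (iii) If $\lambda(S_-)>0$, then $I$ is finite and strictly convex on $\mathbb{R}$ and $I(t)=t(\psi')^{-1}(t)-\psi\big((\psi')^{-1}(t)\big)$ for every $t\in\mathbb{R}$. (iv) In both cases, $I(1/(1-ad))=0$ and $1/(1-ad)$ is the unique (strict) minimizer of $I$.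
   Context: $\psi'$ and $(\psi')^{-1}$ denote the derivative of $\psi$ and the inverse function of $\psi'$ on its range. *)

theory Defs
  imports "HOL-Analysis.Analysis"
begin

definition strict_convex_on :: "real set \<Rightarrow> (real \<Rightarrow> real) \<Rightarrow> bool" where
  "strict_convex_on S f \<longleftrightarrow>
     (\<forall>x\<in>S. \<forall>y\<in>S. \<forall>\<theta>::real. x \<noteq> y \<and> 0 < \<theta> \<and> \<theta> < 1 \<longrightarrow>
        f (\<theta> * x + (1 - \<theta>) * y) < \<theta> * f x + (1 - \<theta>) * f y)"

definition ereal_strict_convex :: "(real \<Rightarrow> ereal) \<Rightarrow> bool" where
  "ereal_strict_convex f \<longleftrightarrow>
     (\<forall>x y \<theta>::real. f x < \<infinity> \<and> f y < \<infinity> \<and> x \<noteq> y \<and> 0 < \<theta> \<and> \<theta> < 1 \<longrightarrow>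
        f (\<theta> * x + (1 - \<theta>) * y) < ereal \<theta> * f x + ereal (1 - \<theta>) * f y)"

definition psi_integrand :: "real \<Rightarrow> ('a::euclidean_space \<Rightarrow> real) \<Rightarrow> real \<Rightarrow> real \<times> 'a \<Rightarrow> real" where
  "psi_integrand a K u = (\<lambda>(s, z). s powr (- (a * real DIM('a))) *
      (exp (s powr (a * real DIM('a)) * (u / (1 - a * real DIM('a))) * K z) - 1))"

definition psi :: "real \<Rightarrow> ('a::euclidean_space \<Rightarrow> real) \<Rightarrow> real \<Rightarrow> real" where
  "psi a K u = (LINT p:({0..1} \<times> UNIV)|(lborel \<Otimes>\<^sub>M (lborel :: 'a measure)). psi_integrand a K u p)"

definition rate :: "real \<Rightarrow> ('a::euclidean_space \<Rightarrow> real) \<Rightarrow> real \<Rightarrow> ereal" where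
  "rate a K t = (SUP u\<in>UNIV. ereal (u * t - psi a K u))"

end

theory Submission
  imports Defs
begin

lemma abs_exp_sub_one_le: "\<bar>exp (y::real) - 1\<bar> \<le> \<bar>y\<bar> * exp \<bar>y\<bar>"
proof (cases "y = 0")
  case False
  consider "y > 0" | "y < 0" using False by linarith
  then show ?thesis
  proof cases
    case 1
    obtain z where z: "0 < z" "z < y" "exp y - exp 0 = (y - 0) * exp z"
      using MVT2[OF 1, of exp exp] by (auto intro: DERIV_exp)
    then show ?thesis using 1 by (simp add: mult_left_mono)
  next
    case 2
    obtain z where z: "y < z" "z < 0" "exp 0 - exp y = (0 - y) * exp z"
      using MVT2[OF 2, of exp exp] by (auto intro: DERIV_exp)
    have "exp z \<le> exp \<bar>y\<bar>" using z 2 by simp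
    then show ?thesis using 2 z by (simp add: abs_if mult_left_mono)
  qed
qed simp

lemma abs_exp_sub_one_sub_le: "\<bar>exp (y::real) - 1 - y\<bar> \<le> y\<^sup>2 * exp \<bar>y\<bar>"
proof (cases "y = 0")
  case False
  have D: "DERIV (\<lambda>t. exp t - 1 - t) t :> exp t - 1" for t
    by (auto intro!: derivative_eq_intros)
  consider "y > 0" | "y < 0" using False by linarith
  then show ?thesis
  proof cases
    case 1
    obtain z where z: "0 < z" "z < y" "(exp y - 1 - y) - (exp 0 - 1 - 0) = (y - 0) * (exp z - 1)"
      using MVT2[OF 1 D] by auto
    have "\<bar>exp z - 1\<bar> \<le> \<bar>z\<bar> * exp \<bar>z\<bar>" by (rule abs_exp_sub_one_le)
    also have "\<dots> \<le> y * exp y" using z by (intro mult_mono) auto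
    finally have le: "\<bar>exp z - 1\<bar> \<le> y * exp y" .
    have e: "exp y - 1 - y = y * (exp z - 1)" using z(3) by (simp add: algebra_simps)
    have "\<bar>exp y - 1 - y\<bar> = \<bar>y\<bar> * \<bar>exp z - 1\<bar>" by (simp add: e abs_mult)
    also have "\<dots> \<le> \<bar>y\<bar> * (y * exp y)" using le by (intro mult_left_mono) auto
    finally show ?thesis using 1 by (simp add: power2_eq_square mult.assoc)
  next
    case 2
    obtain z where z: "y < z" "z < 0" "(exp 0 - 1 - 0) - (exp y - 1 - y) = (0 - y) * (exp z - 1)"
      using MVT2[OF 2 D] by auto
    have "\<bar>exp z - 1\<bar> \<le> \<bar>z\<bar> * exp \<bar>z\<bar>" by (rule abs_exp_sub_one_le)
    also have "\<dots> \<le> \<bar>y\<bar> * exp \<bar>y\<bar>" using z 2 by (intro mult_mono) auto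
    finally have le: "\<bar>exp z - 1\<bar> \<le> \<bar>y\<bar> * exp \<bar>y\<bar>" .
    have e: "exp y - 1 - y = y * (exp z - 1)" using z(3) by (simp add: algebra_simps)
    have "\<bar>exp y - 1 - y\<bar> = \<bar>y\<bar> * \<bar>exp z - 1\<bar>" by (simp add: e abs_mult)
    also have "\<dots> \<le> \<bar>y\<bar> * (\<bar>y\<bar> * exp \<bar>y\<bar>)" using le by (intro mult_left_mono) auto
    finally show ?thesis by (simp add: power2_eq_square mult.assoc)
  qed
qed simp

lemma deriv_from_quad_bound:
  fixes F :: "real \<Rightarrow> real"
  assumes "\<And>h. \<bar>h\<bar> \<le> 1 \<Longrightarrow> \<bar>F (u + h) - F u - h * G\<bar> \<le> C * h\<^sup>2"
  shows "(F has_real_derivative G) (at u)"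
proof -
  have "((\<lambda>h. (F (u + h) - F u) / h - G) \<longlongrightarrow> 0) (at 0)"
  proof (rule Lim_null_comparison)
    show "\<forall>\<^sub>F h in at 0. norm ((F (u + h) - F u) / h - G) \<le> C * \<bar>h\<bar>"
    proof -
      have "\<forall>\<^sub>F h in at (0::real). h \<noteq> 0 \<and> \<bar>h\<bar> < 1"
        unfolding eventually_at by (rule exI[of _ 1]) (auto simp: dist_real_def)
      then show ?thesis
      proof eventually_elim
        case (elim h)
        have "(F (u + h) - F u) / h - G = (F (u + h) - F u - h * G) / h"
          using elim by (simp add: field_simps)
        also have "\<bar>\<dots>\<bar> \<le> C * h\<^sup>2 / \<bar>h\<bar>"
          unfolding abs_divide using assms[of h] elim by (intro divide_right_mono) auto
        also have "\<dots> = C * \<bar>h\<bar>" using elim by (cases "h < 0") (auto simp: power2_eq_square field_simps)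
        finally show ?case by simp
      qed
    qed
    show "((\<lambda>h. C * \<bar>h\<bar>) \<longlongrightarrow> 0) (at 0)"
      by (auto intro!: tendsto_eq_intros)
  qed
  then have "((\<lambda>h. (F (u + h) - F u) / h - G + G) \<longlongrightarrow> 0 + G) (at 0)"
    by (intro tendsto_add) auto
  then show ?thesis by (simp add: DERIV_def)
qed


lemma ub_le: fixes u Bp b :: real assumes "\<bar>Bp\<bar> \<le> b" shows "\<bar>u * Bp\<bar> \<le> \<bar>u\<bar> * b"
  unfolding abs_mult by (rule mult_left_mono[OF assms abs_ge_zero])

lemma pw1: fixes A Bp b u :: real assumes Bb: "\<bar>Bp\<bar> \<le> b"
  shows "\<bar>A * (exp (u * Bp) - 1)\<bar> \<le> \<bar>(\<bar>u\<bar> * exp (\<bar>u\<bar> * b)) * (A * Bp)\<bar>"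
proof -
  have "\<bar>exp (u * Bp) - 1\<bar> \<le> \<bar>u * Bp\<bar> * exp \<bar>u * Bp\<bar>" by (rule abs_exp_sub_one_le)
  also have "\<dots> \<le> \<bar>u * Bp\<bar> * exp (\<bar>u\<bar> * b)"
    using ub_le[OF Bb, of u] by (intro mult_left_mono) auto
  finally have "\<bar>A\<bar> * \<bar>exp (u * Bp) - 1\<bar> \<le> \<bar>A\<bar> * (\<bar>u * Bp\<bar> * exp (\<bar>u\<bar> * b))"
    by (rule mult_left_mono) simp
  also have "\<dots> = \<bar>(\<bar>u\<bar> * exp (\<bar>u\<bar> * b)) * (A * Bp)\<bar>" by (simp add: abs_mult mult_ac)
  finally show ?thesis by (simp add: abs_mult)
qed

lemma pw2: fixes g Bp b u :: real assumes Bb: "\<bar>Bp\<bar> \<le> b"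
  shows "\<bar>g * exp (u * Bp)\<bar> \<le> \<bar>exp (\<bar>u\<bar> * b) * g\<bar>"
proof -
  have "u * Bp \<le> \<bar>u\<bar> * b" using ub_le[OF Bb, of u] by linarith
  then have "exp (u * Bp) \<le> exp (\<bar>u\<bar> * b)" by simp
  then have "\<bar>g\<bar> * exp (u * Bp) \<le> \<bar>g\<bar> * exp (\<bar>u\<bar> * b)" by (rule mult_left_mono) simp
  then show ?thesis by (simp add: abs_mult mult_ac)
qed

lemma pw3: fixes g Bp b :: real assumes Bb: "\<bar>Bp\<bar> \<le> b"
  shows "\<bar>g * Bp\<bar> \<le> \<bar>b * g\<bar>"
proof -
  have "\<bar>g\<bar> * \<bar>Bp\<bar> \<le> \<bar>g\<bar> * b" by (rule mult_left_mono[OF Bb abs_ge_zero])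
  moreover have "0 \<le> b" using Bb by linarith
  ultimately show ?thesis by (simp add: abs_mult mult_ac)
qed

lemma integrable_psiF:
  fixes A B :: "'b \<Rightarrow> real"
  assumes Am[measurable]: "A \<in> borel_measurable M" and Bm[measurable]: "B \<in> borel_measurable M"
    and Bb: "\<And>p. \<bar>B p\<bar> \<le> b" and ABi: "integrable M (\<lambda>p. A p * B p)"
  shows "integrable M (\<lambda>p. A p * (exp (u * B p) - 1))"
proof (rule Bochner_Integration.integrable_bound)
  show "integrable M (\<lambda>p. (\<bar>u\<bar> * exp (\<bar>u\<bar> * b)) * (A p * B p))"
    using ABi by (rule integrable_mult_right)
  show "(\<lambda>p. A p * (exp (u * B p) - 1)) \<in> borel_measurable M" by measurable
  show "AE p in M. norm (A p * (exp (u * B p) - 1)) \<le> norm (\<bar>u\<bar> * exp (\<bar>u\<bar> * b) * (A p * B p))"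
    by (intro AE_I2) (simp only: real_norm_def pw1[OF Bb])
qed

lemma integrable_phiF:
  fixes g B :: "'b \<Rightarrow> real"
  assumes gi: "integrable M g" and Bm[measurable]: "B \<in> borel_measurable M"
    and Bb: "\<And>p. \<bar>B p\<bar> \<le> b"
  shows "integrable M (\<lambda>p. g p * exp (u * B p))"
proof (rule Bochner_Integration.integrable_bound)
  show "integrable M (\<lambda>p. exp (\<bar>u\<bar> * b) * g p)"
    using gi by (rule integrable_mult_right)
  show "(\<lambda>p. g p * exp (u * B p)) \<in> borel_measurable M" using gi by measurable
  show "AE p in M. norm (g p * exp (u * B p)) \<le> norm (exp (\<bar>u\<bar> * b) * g p)"
    by (intro AE_I2) (simp only: real_norm_def pw2[OF Bb])
qed

lemma integrable_mult_B:
  fixes g B :: "'b \<Rightarrow> real"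
  assumes gi: "integrable M g" and Bm[measurable]: "B \<in> borel_measurable M"
    and Bb: "\<And>p. \<bar>B p\<bar> \<le> b"
  shows "integrable M (\<lambda>p. g p * B p)"
proof (rule Bochner_Integration.integrable_bound)
  show "integrable M (\<lambda>p. b * g p)" using gi by (rule integrable_mult_right)
  show "(\<lambda>p. g p * B p) \<in> borel_measurable M" using gi by measurable
  show "AE p in M. norm (g p * B p) \<le> norm (b * g p)"
    by (intro AE_I2) (simp only: real_norm_def pw3[OF Bb])
qed

lemma pw:
  fixes A Bp u h b C :: real
  assumes Bb: "\<bar>Bp\<bar> \<le> b" and h: "\<bar>h\<bar> \<le> 1" and C_def: "C = b * exp ((\<bar>u\<bar> + 1) * b)"
  shows "\<bar>A * (exp ((u + h) * Bp) - 1) - A * (exp (u * Bp) - 1) - h * (A * Bp * exp (u * Bp))\<bar>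
          \<le> h\<^sup>2 * C * \<bar>A * Bp\<bar>"
proof -
    have b0: "0 \<le> b" using Bb by linarith
    have eq: "A * (exp ((u + h) * Bp) - 1) - A * (exp (u * Bp) - 1) - h * (A * Bp * exp (u * Bp))
        = A * exp (u * Bp) * (exp (h * Bp) - 1 - h * Bp)"
      by (simp add: distrib_right exp_add algebra_simps)
    have "u * Bp \<le> \<bar>u\<bar> * b" using ub_le[OF Bb, of u] by linarith
    then have e1: "exp (u * Bp) \<le> exp (\<bar>u\<bar> * b)" by simp
    have "\<bar>h\<bar> * \<bar>Bp\<bar> \<le> 1 * b" using h Bb b0 by (intro mult_mono) auto
    then have hb: "\<bar>h * Bp\<bar> \<le> b" by (simp add: abs_mult)
    have e2: "\<bar>exp (h * Bp) - 1 - h * Bp\<bar> \<le> (h * Bp)\<^sup>2 * exp b"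
    proof -
      have "\<bar>exp (h * Bp) - 1 - h * Bp\<bar> \<le> (h * Bp)\<^sup>2 * exp \<bar>h * Bp\<bar>" by (rule abs_exp_sub_one_sub_le)
      also have "\<dots> \<le> (h * Bp)\<^sup>2 * exp b" using hb by (intro mult_left_mono) auto
      finally show ?thesis .
    qed
    have "\<bar>A * exp (u * Bp) * (exp (h * Bp) - 1 - h * Bp)\<bar>
        = \<bar>A\<bar> * exp (u * Bp) * \<bar>exp (h * Bp) - 1 - h * Bp\<bar>" by (simp add: abs_mult)
    also have "\<dots> \<le> \<bar>A\<bar> * exp (\<bar>u\<bar> * b) * ((h * Bp)\<^sup>2 * exp b)"
      using e1 e2 by (intro mult_mono) auto
    also have "\<dots> = h\<^sup>2 * (exp (\<bar>u\<bar> * b) * exp b) * (\<bar>A * Bp\<bar> * \<bar>Bp\<bar>)"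
      by (simp add: power2_eq_square abs_mult mult_ac)
    also have "\<dots> \<le> h\<^sup>2 * (exp (\<bar>u\<bar> * b) * exp b) * (\<bar>A * Bp\<bar> * b)"
      using Bb by (intro mult_left_mono) auto
    also have "exp (\<bar>u\<bar> * b) * exp b = exp ((\<bar>u\<bar> + 1) * b)" by (simp add: exp_add[symmetric] distrib_right)
    also have "h\<^sup>2 * exp ((\<bar>u\<bar> + 1) * b) * (\<bar>A * Bp\<bar> * b) = h\<^sup>2 * C * \<bar>A * Bp\<bar>"
      by (simp add: C_def mult_ac)
    finally show ?thesis unfolding eq .
qed

lemma deriv_psiF:
  fixes A B :: "'b \<Rightarrow> real"
  assumes Am[measurable]: "A \<in> borel_measurable M" and Bm[measurable]: "B \<in> borel_measurable M"
    and Bb: "\<And>p. \<bar>B p\<bar> \<le> b" and ABi: "integrable M (\<lambda>p. A p * B p)"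
  shows "((\<lambda>u. \<integral>p. A p * (exp (u * B p) - 1) \<partial>M) has_real_derivative
           (\<integral>p. A p * B p * exp (u * B p) \<partial>M)) (at u)"
proof (rule deriv_from_quad_bound)
  fix h :: real assume h: "\<bar>h\<bar> \<le> 1"
  have b0: "0 \<le> b" using Bb[of undefined] by linarith
  define C where "C = b * exp ((\<bar>u\<bar> + 1) * b)"
  have i1: "integrable M (\<lambda>p. A p * (exp ((u + h) * B p) - 1))"
    by (rule integrable_psiF[OF Am Bm Bb ABi])
  have i2: "integrable M (\<lambda>p. A p * (exp (u * B p) - 1))"
    by (rule integrable_psiF[OF Am Bm Bb ABi])
  have i3: "integrable M (\<lambda>p. A p * B p * exp (u * B p))"
    by (rule integrable_phiF[OF ABi Bm Bb])
  have i12: "integrable M (\<lambda>p. A p * (exp ((u + h) * B p) - 1) - A p * (exp (u * B p) - 1))"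
    using i1 i2 by (rule Bochner_Integration.integrable_diff)
  have i3': "integrable M (\<lambda>p. h * (A p * B p * exp (u * B p)))"
    using i3 by (rule integrable_mult_right)
  have E: "(\<integral>p. A p * (exp ((u + h) * B p) - 1) \<partial>M) - (\<integral>p. A p * (exp (u * B p) - 1) \<partial>M)
          - h * (\<integral>p. A p * B p * exp (u * B p) \<partial>M)
        = (\<integral>p. A p * (exp ((u + h) * B p) - 1) - A p * (exp (u * B p) - 1)
                - h * (A p * B p * exp (u * B p)) \<partial>M)"
      unfolding Bochner_Integration.integral_diff[OF i12 i3'] Bochner_Integration.integral_diff[OF i1 i2]
        integral_mult_right_zero ..
  have "\<bar>\<integral>p. A p * (exp ((u + h) * B p) - 1) - A p * (exp (u * B p) - 1)
                - h * (A p * B p * exp (u * B p)) \<partial>M\<bar> \<le> (\<integral>p. \<bar>A p * (exp ((u + h) * B p) - 1) - A p * (exp (u * B p) - 1)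
                - h * (A p * B p * exp (u * B p))\<bar> \<partial>M)"
    by (rule integral_abs_bound)
  also have "\<dots> \<le> (\<integral>p. h\<^sup>2 * C * \<bar>A p * B p\<bar> \<partial>M)"
  proof (rule integral_mono)
    show "integrable M (\<lambda>p. \<bar>A p * (exp ((u + h) * B p) - 1) - A p * (exp (u * B p) - 1)
                - h * (A p * B p * exp (u * B p))\<bar>)"
      by (rule integrable_abs[OF Bochner_Integration.integrable_diff[OF i12 i3']])
    show "integrable M (\<lambda>p. h\<^sup>2 * C * \<bar>A p * B p\<bar>)"
      by (rule integrable_mult_right[OF integrable_abs[OF ABi]])
    fix p
    show "\<bar>A p * (exp ((u + h) * B p) - 1) - A p * (exp (u * B p) - 1)
                - h * (A p * B p * exp (u * B p))\<bar> \<le> h\<^sup>2 * C * \<bar>A p * B p\<bar>"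
      by (rule pw[OF Bb h C_def])
  qed
  also have "\<dots> = (C * (\<integral>p. \<bar>A p * B p\<bar> \<partial>M)) * h\<^sup>2"
    unfolding integral_mult_right_zero by (simp only: mult_ac)
  finally have "\<bar>\<integral>p. A p * (exp ((u + h) * B p) - 1) - A p * (exp (u * B p) - 1)
                - h * (A p * B p * exp (u * B p)) \<partial>M\<bar> \<le> (C * (\<integral>p. \<bar>A p * B p\<bar> \<partial>M)) * h\<^sup>2" .
  then show "\<bar>(\<integral>p. A p * (exp ((u + h) * B p) - 1) \<partial>M) - (\<integral>p. A p * (exp (u * B p) - 1) \<partial>M)
          - h * (\<integral>p. A p * B p * exp (u * B p) \<partial>M)\<bar> \<le> (C * (\<integral>p. \<bar>A p * B p\<bar> \<partial>M)) * h\<^sup>2"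
    unfolding E .
qed

lemma deriv_phiF:
  fixes g B :: "'b \<Rightarrow> real"
  assumes gi: "integrable M g" and Bm[measurable]: "B \<in> borel_measurable M"
    and Bb: "\<And>p. \<bar>B p\<bar> \<le> b"
  shows "((\<lambda>u. \<integral>p. g p * exp (u * B p) \<partial>M) has_real_derivative
           (\<integral>p. g p * B p * exp (u * B p) \<partial>M)) (at u)"
proof -
  have gm[measurable]: "g \<in> borel_measurable M" using gi by auto
  have gB: "integrable M (\<lambda>p. g p * B p)" by (rule integrable_mult_B[OF gi Bm Bb])
  have eq: "(\<integral>p. g p * exp (u * B p) \<partial>M) = (\<integral>p. g p * (exp (u * B p) - 1) \<partial>M) + (\<integral>p. g p \<partial>M)" for u
  proof -
    have "(\<integral>p. g p * exp (u * B p) \<partial>M) = (\<integral>p. g p * (exp (u * B p) - 1) + g p \<partial>M)"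
      by (simp add: algebra_simps)
    also have "\<dots> = (\<integral>p. g p * (exp (u * B p) - 1) \<partial>M) + (\<integral>p. g p \<partial>M)"
      using integrable_psiF[OF gm Bm Bb gB] gi by (rule Bochner_Integration.integral_add)
    finally show ?thesis .
  qed
  have "((\<lambda>u. (\<integral>p. g p * (exp (u * B p) - 1) \<partial>M) + (\<integral>p. g p \<partial>M)) has_real_derivative
           (\<integral>p. g p * B p * exp (u * B p) \<partial>M) + 0) (at u)"
    by (intro DERIV_add deriv_psiF[OF gm Bm Bb gB] DERIV_const)
  then show ?thesis unfolding eq by simp
qed

definition LT :: "(real \<Rightarrow> real) \<Rightarrow> real \<Rightarrow> ereal" where
  "LT f t = (SUP u\<in>UNIV. ereal (u * t - f u))"

locale leg =
  fixes f f1 f2 :: "real \<Rightarrow> real"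
  assumes d1: "\<And>u. (f has_real_derivative f1 u) (at u)"
    and d2: "\<And>u. (f1 has_real_derivative f2 u) (at u)"
    and pos: "\<And>u. f2 u > 0"
    and f0: "f 0 = 0"
begin

lemma f1_less: "x < y \<Longrightarrow> f1 x < f1 y"
  by (rule DERIV_pos_imp_increasing[of x y f1]) (use d2 pos in blast)+

lemma f1_inj: "inj f1"
  by (rule injI) (metis f1_less not_less_iff_gr_or_eq)

lemma tangent_strict:
  assumes "w \<noteq> z" shows "f z + f1 z * (w - z) < f w"
proof (cases "z < w")
  case True
  obtain \<xi> where \<xi>: "z < \<xi>" "\<xi> < w" "f w - f z = (w - z) * f1 \<xi>"
    using MVT2[OF True d1] by blast
  have "f1 z < f1 \<xi>" using \<xi> f1_less by blast
  then have "(w - z) * f1 z < (w - z) * f1 \<xi>" using True by simp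
  then show ?thesis using \<xi> by (simp add: algebra_simps)
next
  case False
  then have wz: "w < z" using assms by linarith
  obtain \<xi> where \<xi>: "w < \<xi>" "\<xi> < z" "f z - f w = (z - w) * f1 \<xi>"
    using MVT2[OF wz d1] by blast
  have "f1 \<xi> < f1 z" using \<xi> f1_less by blast
  then have "(z - w) * f1 \<xi> < (z - w) * f1 z" using wz by simp
  then show ?thesis using \<xi> by (simp add: algebra_simps)
qed

lemma tangent: "f z + f1 z * (w - z) \<le> f w"
  using tangent_strict[of w z] by (cases "w = z") auto

lemma strict_convex: "strict_convex_on UNIV f"
  unfolding strict_convex_on_def
proof (intro ballI allI impI)
  fix x y \<theta> :: real assume as: "x \<noteq> y \<and> 0 < \<theta> \<and> \<theta> < 1"
  define z where "z = \<theta> * x + (1 - \<theta>) * y"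
  have xz: "x \<noteq> z"
  proof
    assume "x = z" then have "(1 - \<theta>) * (x - y) = 0" by (simp add: z_def algebra_simps)
    then show False using as by simp
  qed
  have yz: "y \<noteq> z"
  proof
    assume "y = z" then have "\<theta> * (x - y) = 0" by (auto simp: z_def algebra_simps)
    then show False using as by auto
  qed
  have 1: "\<theta> * (f z + f1 z * (x - z)) < \<theta> * f x"
    using tangent_strict[OF xz] as by simp
  have 2: "(1 - \<theta>) * (f z + f1 z * (y - z)) < (1 - \<theta>) * f y"
    using tangent_strict[OF yz] as by simp
  have 3: "\<theta> * (f z + f1 z * (x - z)) + (1 - \<theta>) * (f z + f1 z * (y - z)) = f z"
    unfolding z_def by (simp add: algebra_simps)
  show "f (\<theta> * x + (1 - \<theta>) * y) < \<theta> * f x + (1 - \<theta>) * f y"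
    using 1 2 3 unfolding z_def[symmetric] by linarith
qed

lemma LT_ge: "ereal (u * t - f u) \<le> LT f t"
  unfolding LT_def by (rule SUP_upper) simp

lemma LT_nonneg: "LT f t \<ge> 0"
  using LT_ge[of 0 t] f0 by (simp add: zero_ereal_def)

lemma LT_le_iff: "LT f t \<le> ereal c \<longleftrightarrow> (\<forall>u. u * t - f u \<le> c)"
  unfolding LT_def by (simp add: SUP_le_iff)

lemma LT_compact: "compact {t. LT f t \<le> ereal c}"
proof -
  have cf: "continuous_on UNIV f" using d1
    by (meson DERIV_isCont continuous_at_imp_continuous_on)
  have eq: "{t. LT f t \<le> ereal c} = {t. \<forall>u. u * t - f u \<le> c}"
    by (simp add: LT_le_iff)
  have cl: "closed {t. \<forall>u. u * t - f u \<le> c}"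
    by (intro closed_Collect_all closed_Collect_le continuous_intros)
  have "{t. \<forall>u. u * t - f u \<le> c} \<subseteq> {- (c + f (-1)) .. c + f 1}"
  proof
    fix t assume "t \<in> {t. \<forall>u. u * t - f u \<le> c}"
    then have "1 * t - f 1 \<le> c" "(-1) * t - f (-1) \<le> c" by blast+
    then show "t \<in> {- (c + f (-1)) .. c + f 1}" by auto
  qed
  then have "bounded {t. \<forall>u. u * t - f u \<le> c}"
    by (rule bounded_subset[OF bounded_closed_interval])
  then show ?thesis using cl eq by (simp add: compact_eq_bounded_closed)
qed

lemma LT_attained_imp:
  assumes "\<And>u. u * t - f u \<le> u0 * t - f u0"
  shows "f1 u0 = t"
proof -
  have D: "((\<lambda>u. u * t - f u) has_real_derivative (t - f1 u0)) (at u0)"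
    using d1[of u0] by (auto intro!: derivative_eq_intros)
  have "t - f1 u0 = 0"
    by (rule DERIV_local_max[OF D zero_less_one]) (use assms in auto)
  then show ?thesis by simp
qed

lemma LT_eq_imp:
  assumes "LT f t = ereal (u0 * t - f u0)"
  shows "f1 u0 = t"
  by (rule LT_attained_imp) (metis LT_ge assms ereal_less_eq(3))

lemma LT_at_f1: "LT f (f1 u0) = ereal (u0 * f1 u0 - f u0)"
proof (rule antisym)
  show "LT f (f1 u0) \<le> ereal (u0 * f1 u0 - f u0)"
    unfolding LT_le_iff
  proof
    fix u show "u * f1 u0 - f u \<le> u0 * f1 u0 - f u0"
      using tangent[of u0 u] by (simp add: algebra_simps)
  qed
  show "ereal (u0 * f1 u0 - f u0) \<le> LT f (f1 u0)" by (rule LT_ge)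
qed

lemma inv_f1: "inv_into UNIV f1 (f1 u0) = u0"
  using f1_inj by (simp add: inv_into_f_f)

lemma LT_formula:
  assumes "t \<in> range f1"
  shows "LT f t = ereal (t * inv_into UNIV f1 t - f (inv_into UNIV f1 t))"
proof -
  obtain u0 where t: "t = f1 u0" using assms by blast
  show ?thesis unfolding t inv_f1 LT_at_f1 by (simp add: mult.commute)
qed

lemma LT_min: "LT f (f1 0) = 0" and LT_min2: "t \<noteq> f1 0 \<Longrightarrow> LT f t > LT f (f1 0)"
proof -
  show 0: "LT f (f1 0) = 0" using LT_at_f1[of 0] f0 by (simp add: zero_ereal_def)
  assume t: "t \<noteq> f1 0"
  have "LT f t \<noteq> 0"
  proof
    assume "LT f t = 0"
    then have "LT f t = ereal (0 * t - f 0)" using f0 by (simp add: zero_ereal_def)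
    then have "f1 0 = t" by (rule LT_eq_imp)
    then show False using t by simp
  qed
  then show "LT f t > LT f (f1 0)" using LT_nonneg[of t] 0 by auto
qed

lemma LT_strict_convex:
  assumes H: "\<And>x y \<theta>. LT f x < \<infinity> \<Longrightarrow> LT f y < \<infinity> \<Longrightarrow> x \<noteq> y \<Longrightarrow> 0 < \<theta> \<Longrightarrow> \<theta> < 1 \<Longrightarrow>
               \<theta> * x + (1 - \<theta>) * y \<in> range f1"
  shows "ereal_strict_convex (LT f)"
  unfolding ereal_strict_convex_def
proof (intro allI impI, elim conjE)
  fix x y \<theta> :: real
  assume fx: "LT f x < \<infinity>" and fy: "LT f y < \<infinity>" and xy: "x \<noteq> y" and th: "0 < \<theta>" "\<theta> < 1"
  define z where "z = \<theta> * x + (1 - \<theta>) * y"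
  obtain u where zu: "z = f1 u" using H[OF fx fy xy th] z_def by blast
  obtain X where X: "LT f x = ereal X" using fx LT_nonneg[of x]
    by (cases "LT f x") auto
  obtain Y where Y: "LT f y = ereal Y" using fy LT_nonneg[of y]
    by (cases "LT f y") auto
  have lx: "u * x - f u \<le> X" using LT_ge[of u x] X by simp
  have ly: "u * y - f u \<le> Y" using LT_ge[of u y] Y by simp
  have strict: "u * x - f u < X \<or> u * y - f u < Y"
  proof (rule ccontr)
    assume "\<not> ?thesis"
    then have "u * x - f u = X" "u * y - f u = Y" using lx ly by auto
    then have "f1 u = x" "f1 u = y" using LT_eq_imp X Y by metis+
    then show False using xy by simp
  qed
  have "\<theta> * (u * x - f u) + (1 - \<theta>) * (u * y - f u) < \<theta> * X + (1 - \<theta>) * Y"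
  proof -
    have a: "\<theta> * (u * x - f u) \<le> \<theta> * X" using lx th by simp
    have b: "(1 - \<theta>) * (u * y - f u) \<le> (1 - \<theta>) * Y" using ly th by simp
    have "\<theta> * (u * x - f u) < \<theta> * X \<or> (1 - \<theta>) * (u * y - f u) < (1 - \<theta>) * Y"
      using strict th by auto
    then show ?thesis using a b by linarith
  qed
  moreover have "\<theta> * (u * x - f u) + (1 - \<theta>) * (u * y - f u) = u * z - f u"
    unfolding z_def by (simp add: algebra_simps)
  moreover have "LT f z = ereal (u * z - f u)" unfolding zu LT_at_f1 ..
  ultimately show "LT f (\<theta> * x + (1 - \<theta>) * y) < ereal \<theta> * LT f x + ereal (1 - \<theta>) * LT f y"
    unfolding X Y z_def[symmetric] by simp
qed

lemma LT_continuous: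
  assumes S: "open S" "convex S" "S \<subseteq> range f1"
  shows "continuous_on S (LT f)"
proof -
  define g where "g t = t * inv_into UNIV f1 t - f (inv_into UNIV f1 t)" for t
  have LTg: "LT f t = ereal (g t)" if "t \<in> S" for t
    using LT_formula[of t] that S(3) g_def by auto
  have bnd: "u * t - f u \<le> g t" if "t \<in> S" for u t
    using LT_ge[of u t] LTg[OF that] by simp
  have "convex_on S g"
  proof (rule convex_onI[OF _ S(2)])
    fix s x y :: real assume s: "0 < s" "s < 1" and xy: "x \<in> S" "y \<in> S"
    define z where "z = (1 - s) *\<^sub>R x + s *\<^sub>R y"
    have zS: "z \<in> S" using S(2) xy s unfolding z_def by (simp add: convex_def)
    obtain u where zu: "z = f1 u" using zS S(3) by blast
    have gz: "g z = u * z - f u" using LTg[OF zS] unfolding zu LT_at_f1 by simp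
    have "u * z - f u = (1 - s) * (u * x - f u) + s * (u * y - f u)"
      unfolding z_def by (simp add: algebra_simps)
    also have "\<dots> \<le> (1 - s) * g x + s * g y"
      using bnd[OF xy(1), of u] bnd[OF xy(2), of u] s
      by (intro add_mono mult_left_mono) auto
    finally show "g ((1 - s) *\<^sub>R x + s *\<^sub>R y) \<le> (1 - s) * g x + s * g y"
      using gz z_def by simp
  qed
  then have "continuous_on S g" by (rule convex_on_continuous[OF S(1)])
  then have "continuous_on S (\<lambda>t. ereal (g t))"
    by (rule continuous_on_ereal)
  then show ?thesis
    by (rule continuous_on_cong[THEN iffD1, rotated 2]) (auto simp: LTg)
qed

end

lemma integrable_prod:
  fixes f :: "real \<Rightarrow> real" and g :: "'a::euclidean_space \<Rightarrow> real"
  assumes f: "integrable lborel f" and g: "integrable lborel g"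
  shows "integrable (lborel \<Otimes>\<^sub>M (lborel :: 'a measure)) (\<lambda>p. f (fst p) * g (snd p))"
    and "(\<integral>p. f (fst p) * g (snd p) \<partial>(lborel \<Otimes>\<^sub>M (lborel :: 'a measure))) = (\<integral>x. f x \<partial>lborel) * (\<integral>y. g y \<partial>lborel)"
proof -
  have fm[measurable]: "f \<in> borel_measurable borel" using borel_measurable_integrable[OF f] by simp
  have gm[measurable]: "g \<in> borel_measurable borel" using borel_measurable_integrable[OF g] by simp
  show I: "integrable (lborel \<Otimes>\<^sub>M (lborel :: 'a measure)) (\<lambda>p. f (fst p) * g (snd p))"
  proof (rule lborel_pair.Fubini_integrable)
    show "(\<lambda>p. f (fst p) * g (snd p)) \<in> borel_measurable (lborel \<Otimes>\<^sub>M (lborel :: 'a measure))" by measurable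
    have "integrable lborel (\<lambda>x. \<bar>f x\<bar> * (\<integral>y. \<bar>g y\<bar> \<partial>lborel))"
      using f by (intro integrable_mult_left integrable_abs)
    then show "integrable lborel (\<lambda>x. \<integral>y. norm (f (fst (x, y)) * g (snd (x, y))) \<partial>lborel)"
      by (simp add: abs_mult)
    show "AE x in lborel. integrable lborel (\<lambda>y. f (fst (x, y)) * g (snd (x, y)))"
      using g by (intro AE_I2) simp
  qed
  have "(\<integral>p. f (fst p) * g (snd p) \<partial>(lborel \<Otimes>\<^sub>M (lborel :: 'a measure))) = (\<integral>x. (\<integral>y. f (fst (x, y)) * g (snd (x, y)) \<partial>lborel) \<partial>lborel)"
    using lborel_pair.integral_fst'[OF I] by simp
  also have "\<dots> = (\<integral>x. f x * (\<integral>y. g y \<partial>lborel) \<partial>lborel)" by simp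
  also have "\<dots> = (\<integral>x. f x \<partial>lborel) * (\<integral>y. g y \<partial>lborel)" by simp
  finally show "(\<integral>p. f (fst p) * g (snd p) \<partial>(lborel \<Otimes>\<^sub>M (lborel :: 'a measure))) = (\<integral>x. f x \<partial>lborel) * (\<integral>y. g y \<partial>lborel)" .
qed
locale kset =
  fixes K :: "'a::euclidean_space \<Rightarrow> real" and a :: real
  assumes a_pos: "0 < a" and a_lt: "a < 1 / real DIM('a)"
    and K_bounded: "bounded (range K)"
    and K_int: "integrable lborel K"
    and K_one: "(\<integral>z. K z \<partial>lborel) = 1"
begin

definition bet :: real where "bet = a * real DIM('a)"
definition Kmax :: real where "Kmax = (SOME m. \<forall>z. \<bar>K z\<bar> \<le> m)"
definition A :: "real \<times> 'a \<Rightarrow> real" where "A p = indicator {0..1} (fst p) * fst p powr (- bet)"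
definition B :: "real \<times> 'a \<Rightarrow> real" where
  "B p = indicator {0..1} (fst p) * (fst p powr bet * K (snd p) / (1 - bet))"
definition AB :: "real \<times> 'a \<Rightarrow> real" where
  "AB p = indicator {0<..1} (fst p) * (K (snd p) / (1 - bet))"

abbreviation "M \<equiv> (lborel :: real measure) \<Otimes>\<^sub>M (lborel :: 'a measure)"

lemma bet_pos: "0 < bet" and bet_lt1: "bet < 1"
proof -
  have d: "0 < real DIM('a)" by simp
  show "0 < bet" using a_pos d by (simp add: bet_def)
  have "a * real DIM('a) < 1 / real DIM('a) * real DIM('a)"
    using a_lt d by (rule mult_strict_right_mono)
  then show "bet < 1" using d by (simp add: bet_def)
qed

lemma Kmax: "\<bar>K z\<bar> \<le> Kmax"
proof -
  have "\<exists>m. \<forall>z. \<bar>K z\<bar> \<le> m" using K_bounded unfolding bounded_real by auto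
  then have "\<forall>z. \<bar>K z\<bar> \<le> Kmax" unfolding Kmax_def by (rule someI_ex)
  then show ?thesis by blast
qed

lemma K_meas[measurable]: "K \<in> borel_measurable borel"
  using borel_measurable_integrable[OF K_int] by simp

lemma A_meas[measurable]: "A \<in> borel_measurable M"
  unfolding A_def by measurable

lemma B_meas[measurable]: "B \<in> borel_measurable M"
  unfolding B_def by measurable

lemma AB_meas[measurable]: "AB \<in> borel_measurable M"
  unfolding AB_def by measurable

definition bB :: real where "bB = Kmax / (1 - bet)"

lemma B_bound: "\<bar>B p\<bar> \<le> bB"
proof (cases "fst p \<in> {0..1}")
  case True
  have 1: "fst p powr bet \<le> 1" using True bet_pos by (intro powr_le1) auto
  have 2: "0 \<le> fst p powr bet" by simp
  have "\<bar>fst p powr bet * K (snd p)\<bar> \<le> 1 * Kmax"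
    unfolding abs_mult using 1 2 Kmax[of "snd p"] by (intro mult_mono) auto
  then show ?thesis using True bet_lt1 unfolding B_def bB_def
    by (simp add: abs_divide divide_right_mono)
next
  case False
  have "0 \<le> Kmax" using Kmax[of 0] by linarith
  then show ?thesis using False bet_lt1 unfolding B_def bB_def by simp
qed

lemma AB_eq: "A p * B p = AB p"
proof (cases "fst p \<in> {0<..1}")
  case True
  then have "fst p powr (- bet) * fst p powr bet = 1"
    by (simp add: powr_add[symmetric])
  then show ?thesis using True unfolding A_def B_def AB_def
    by (simp add: algebra_simps)
next
  case False
  show ?thesis
  proof (cases "fst p = 0")
    case True then show ?thesis unfolding A_def B_def AB_def by simp
  next
    case False2: False
    then have "fst p \<notin> {0..1}" using False by auto
    then show ?thesis unfolding A_def B_def AB_def by simp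
  qed
qed

lemma AB_int: "integrable M AB" and AB_integral: "(\<integral>p. AB p \<partial>M) = 1 / (1 - bet)"
proof -
  have i1: "integrable lborel (indicator {0<..1::real} :: real \<Rightarrow> real)"
    by (rule integrable_real_indicator) auto
  have i2: "integrable lborel (\<lambda>z. K z / (1 - bet))" using K_int by simp
  have e: "AB = (\<lambda>p. indicator {0<..1} (fst p) * (K (snd p) / (1 - bet)))"
    by (simp add: AB_def fun_eq_iff)
  show "integrable M AB" unfolding e by (rule integrable_prod[OF i1 i2])
  have "(\<integral>p. AB p \<partial>M) = (\<integral>x. indicator {0<..1::real} x \<partial>lborel) * (\<integral>z. K z / (1 - bet) \<partial>lborel)"
    unfolding e by (rule integrable_prod[OF i1 i2])
  also have "\<dots> = 1 / (1 - bet)" using K_one by simp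
  finally show "(\<integral>p. AB p \<partial>M) = 1 / (1 - bet)" .
qed

lemma ABi: "integrable M (\<lambda>p. A p * B p)"
  unfolding AB_eq by (rule AB_int)

end

lemma integral_pos_on:
  fixes f :: "'b \<Rightarrow> real"
  assumes fi: "integrable M f" and nn: "\<And>p. 0 \<le> f p" and E: "E \<in> sets M"
    and Em: "emeasure M E > 0" and fE: "\<And>p. p \<in> E \<Longrightarrow> 0 < f p"
  shows "(\<integral>p. f p \<partial>M) > 0"
proof -
  have ge: "(\<integral>p. f p \<partial>M) \<ge> 0" using nn by (intro integral_nonneg_AE) auto
  have "(\<integral>p. f p \<partial>M) \<noteq> 0"
  proof
    assume "(\<integral>p. f p \<partial>M) = 0"
    then have "AE p in M. f p = 0" using integral_nonneg_eq_0_iff_AE[OF fi] nn by auto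
    then have "AE p in M. p \<notin> E" by eventually_elim (use fE in force)
    then have "E \<in> null_sets M" using AE_iff_null_sets[OF E] by simp
    then show False using Em by auto
  qed
  then show ?thesis using ge by linarith
qed

context kset
begin

definition ps1 :: "real \<Rightarrow> real" where "ps1 u = (\<integral>p. A p * B p * exp (u * B p) \<partial>M)"
definition ps2 :: "real \<Rightarrow> real" where "ps2 u = (\<integral>p. A p * B p * B p * exp (u * B p) \<partial>M)"
definition ps3 :: "real \<Rightarrow> real" where "ps3 u = (\<integral>p. A p * B p * B p * B p * exp (u * B p) \<partial>M)"

lemma integrand_eq:
  "indicator ({0..1} \<times> UNIV) p *\<^sub>R psi_integrand a K u p = A p * (exp (u * B p) - 1)"
proof (cases p)
  case (Pair s z)
  have "s powr (a * real DIM('a)) * (u / (1 - a * real DIM('a))) * K z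
        = u * (s powr bet * K z / (1 - bet))" by (simp add: bet_def)
  then show ?thesis unfolding Pair psi_integrand_def A_def B_def
    by (auto simp: indicator_def bet_def)
qed

lemma psi_eq: "psi a K u = (\<integral>p. A p * (exp (u * B p) - 1) \<partial>M)"
  unfolding psi_def set_lebesgue_integral_def integrand_eq ..

lemma psi_set_integrable: "set_integrable M ({0..1} \<times> UNIV) (psi_integrand a K u)"
  unfolding set_integrable_def integrand_eq
  by (rule integrable_psiF[OF A_meas B_meas B_bound ABi])

lemma ABB_int: "integrable M (\<lambda>p. A p * B p * B p)"
  by (rule integrable_mult_B[OF ABi B_meas B_bound])

lemma ABBB_int: "integrable M (\<lambda>p. A p * B p * B p * B p)"
  by (rule integrable_mult_B[OF ABB_int B_meas B_bound])

lemma D1: "(psi a K has_real_derivative ps1 u) (at u)"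
proof -
  have "((\<lambda>u. \<integral>p. A p * (exp (u * B p) - 1) \<partial>M) has_real_derivative ps1 u) (at u)"
    unfolding ps1_def by (rule deriv_psiF[OF A_meas B_meas B_bound ABi])
  moreover have "psi a K = (\<lambda>u. \<integral>p. A p * (exp (u * B p) - 1) \<partial>M)"
    by (simp add: fun_eq_iff psi_eq)
  ultimately show ?thesis by simp
qed

lemma D2: "(ps1 has_real_derivative ps2 u) (at u)"
proof -
  have "((\<lambda>u. \<integral>p. A p * B p * exp (u * B p) \<partial>M) has_real_derivative ps2 u) (at u)"
    unfolding ps2_def by (rule deriv_phiF[OF ABi B_meas B_bound])
  then show ?thesis by (simp add: ps1_def[abs_def])
qed

lemma D3: "(ps2 has_real_derivative ps3 u) (at u)"
proof -
  have "((\<lambda>u. \<integral>p. A p * B p * B p * exp (u * B p) \<partial>M) has_real_derivative ps3 u) (at u)"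
    unfolding ps3_def by (rule deriv_phiF[OF ABB_int B_meas B_bound])
  then show ?thesis by (simp add: ps2_def[abs_def])
qed

lemma A_nonneg: "0 \<le> A p"
  unfolding A_def by simp

lemma ABB_nonneg: "0 \<le> A p * B p * B p"
  unfolding mult.assoc by (rule mult_nonneg_nonneg[OF A_nonneg zero_le_square])

lemma Kpos_measure: "emeasure lborel {z. K z > 0} > 0"
proof (rule ccontr)
  assume "\<not> ?thesis"
  then have "emeasure lborel {z. K z > 0} = 0" by (simp add: not_less)
  then have "AE z in lborel. \<not> K z > 0"
    by (subst AE_iff_measurable[where N="{z. K z > 0}"]) auto
  then have "AE z in lborel. 0 \<le> - K z" by eventually_elim simp
  then have "0 \<le> (\<integral>z. - K z \<partial>lborel)" by (rule integral_nonneg_AE)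
  then show False using K_one by simp
qed

lemma E_measure:
  assumes "emeasure lborel {z. P (K z)} > 0" and [measurable]: "Measurable.pred borel P"
  shows "emeasure M ({0<..1} \<times> {z. P (K z)}) > 0"
proof -
  have "emeasure M ({0<..1::real} \<times> {z. P (K z)}) = emeasure (lborel :: real measure) {0<..1::real} * emeasure lborel {z. P (K z)}"
    using lborel.emeasure_pair_measure_Times[of "{0<..1::real}" lborel "{z. P (K z)}"] by simp
  then show ?thesis using assms by simp
qed

lemma B_pos_on: "fst p \<in> {0<..1} \<Longrightarrow> K (snd p) > 0 \<Longrightarrow> B p > 0"
  unfolding B_def using bet_lt1 by (auto intro!: divide_pos_pos mult_pos_pos)

lemma B_neg_on: "fst p \<in> {0<..1} \<Longrightarrow> K (snd p) < 0 \<Longrightarrow> B p < 0"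
  unfolding B_def using bet_lt1 by (auto intro!: divide_neg_pos mult_pos_neg)

lemma A_pos_on: "fst p \<in> {0<..1} \<Longrightarrow> A p > 0"
  unfolding A_def by auto

lemma ABB_pos_on: "fst p \<in> {0<..1} \<Longrightarrow> K (snd p) \<noteq> 0 \<Longrightarrow> A p * B p * B p > 0"
proof -
  assume s: "fst p \<in> {0<..1}" and k: "K (snd p) \<noteq> 0"
  have "B p \<noteq> 0" using B_pos_on[OF s] B_neg_on[OF s] k by (cases "K (snd p) > 0") auto
  then have "B p * B p > 0" by (metis mult_neg_neg mult_pos_pos not_less_iff_gr_or_eq)
  then show ?thesis unfolding mult.assoc by (rule mult_pos_pos[OF A_pos_on[OF s]])
qed

lemma ps2_pos: "ps2 u > 0"
  unfolding ps2_def
proof (rule integral_pos_on[where E="{0<..1} \<times> {z. K z > 0}"])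
  show "integrable M (\<lambda>p. A p * B p * B p * exp (u * B p))"
    by (rule integrable_phiF[OF ABB_int B_meas B_bound])
  show "0 \<le> A p * B p * B p * exp (u * B p)" for p using ABB_nonneg[of p] by simp
  have "{z. K z > 0} \<in> sets borel" by measurable
  then show "{0<..1} \<times> {z. K z > 0} \<in> sets M"
    by (intro pair_measureI) (auto simp: greaterThanAtMost_borel)
  show "emeasure M ({0<..1} \<times> {z. K z > 0}) > 0"
    using E_measure[of "\<lambda>x. x > 0"] Kpos_measure by simp
  show "0 < A p * B p * B p * exp (u * B p)" if "p \<in> {0<..1} \<times> {z. K z > 0}" for p
    using ABB_pos_on[of p] that by (auto simp: mem_Times_iff)
qed

lemma psi0: "psi a K 0 = 0"
  unfolding psi_eq by simp

lemma ps1_0: "ps1 0 = 1 / (1 - bet)"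
  unfolding ps1_def using AB_integral by (simp add: AB_eq)

end

sublocale kset \<subseteq> leg "psi a K" ps1 ps2
  by unfold_locales (auto intro: D1 D2 ps2_pos psi0)

context leg begin

lemma f1_cont: "continuous_on S f1"
  using d2 by (meson DERIV_isCont continuous_at_imp_continuous_on)

lemma f1_above:
  assumes P: "\<And>u. u \<ge> 0 \<Longrightarrow> f2 u \<ge> P" "P > 0"
  shows "\<exists>u. t \<le> f1 u"
proof -
  define u where "u = \<bar>t - f1 0\<bar> / P + 1"
  have u0: "0 < u" using P(2) by (simp add: u_def add_nonneg_pos)
  obtain \<xi> where \<xi>: "0 < \<xi>" "\<xi> < u" "f1 u - f1 0 = (u - 0) * f2 \<xi>"
    using MVT2[OF u0 d2] by blast
  have "u * P \<le> u * f2 \<xi>" using P(1)[of \<xi>] \<xi> u0 by (intro mult_left_mono) auto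
  moreover have "u * P = \<bar>t - f1 0\<bar> + P" using P(2) by (simp add: u_def field_simps)
  moreover have "f1 u - f1 0 = u * f2 \<xi>" using \<xi>(3) by simp
  ultimately have "t \<le> f1 u" using P(2) by linarith
  then show ?thesis by blast
qed

lemma f1_below:
  assumes N: "\<And>u. u \<le> 0 \<Longrightarrow> f2 u \<ge> N" "N > 0"
  shows "\<exists>u. f1 u \<le> t"
proof -
  define u where "u = - (\<bar>t - f1 0\<bar> / N + 1)"
  have u0: "u < 0" using N(2) unfolding u_def
    by (metis add_nonneg_pos divide_nonneg_pos abs_ge_zero less_le neg_less_0_iff_less zero_less_one)
  obtain \<xi> where \<xi>: "u < \<xi>" "\<xi> < 0" "f1 0 - f1 u = (0 - u) * f2 \<xi>"
    using MVT2[OF u0 d2] by blast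
  have "(- u) * N \<le> (- u) * f2 \<xi>" using N(1)[of \<xi>] \<xi> u0 by (intro mult_left_mono) auto
  moreover have "(- u) * N = \<bar>t - f1 0\<bar> + N" using N(2) by (simp add: u_def field_simps)
  moreover have "f1 0 - f1 u = (- u) * f2 \<xi>" using \<xi>(3) by simp
  ultimately have "f1 u \<le> t" using N(2) by linarith
  then show ?thesis by blast
qed

lemma in_range:
  assumes "f1 u1 \<le> t" "t \<le> f1 u2" shows "t \<in> range f1"
proof -
  have "u1 \<le> u2"
  proof (rule ccontr)
    assume "\<not> u1 \<le> u2" then have "f1 u2 < f1 u1" using f1_less by simp
    then show False using assms by linarith
  qed
  then obtain x where "f1 x = t" using IVT'[of f1 u1 t u2] assms f1_cont by blast
  then show ?thesis by blast
qed

lemma deriv_f: "deriv f = f1"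
  using d1 DERIV_imp_deriv by blast

lemma deriv_f1: "deriv f1 = f2"
  using d2 DERIV_imp_deriv by blast

end

context kset begin

definition Pp :: real where "Pp = (\<integral>p. A p * B p * B p * (if B p > 0 then 1 else 0) \<partial>M)"
definition Nn :: real where "Nn = (\<integral>p. A p * B p * B p * (if B p < 0 then 1 else 0) \<partial>M)"

lemma int_ABB_if:
  assumes [measurable]: "Measurable.pred M Q"
  shows "integrable M (\<lambda>p. A p * B p * B p * (if Q p then 1 else 0))"
proof (rule Bochner_Integration.integrable_bound[OF ABB_int])
  show "(\<lambda>p. A p * B p * B p * (if Q p then 1 else 0)) \<in> borel_measurable M" by measurable
  show "AE p in M. norm (A p * B p * B p * (if Q p then 1 else 0)) \<le> norm (A p * B p * B p)"
    by (intro AE_I2) (auto simp: abs_mult)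
qed

lemma int_ABB_exp: "integrable M (\<lambda>p. A p * B p * B p * exp (u * B p))"
  by (rule integrable_phiF[OF ABB_int B_meas B_bound])

lemma Pp_pos: "Pp > 0"
  unfolding Pp_def
proof (rule integral_pos_on[where E="{0<..1} \<times> {z. K z > 0}"])
  show "integrable M (\<lambda>p. A p * B p * B p * (if B p > 0 then 1 else 0))"
    by (rule int_ABB_if) measurable
  show "0 \<le> A p * B p * B p * (if B p > 0 then 1 else 0)" for p using ABB_nonneg[of p] by simp
  have "{z. K z > 0} \<in> sets borel" by measurable
  then show "{0<..1} \<times> {z. K z > 0} \<in> sets M"
    by (intro pair_measureI) (auto simp: greaterThanAtMost_borel)
  show "emeasure M ({0<..1} \<times> {z. K z > 0}) > 0"
    using E_measure[of "\<lambda>x. x > 0"] Kpos_measure by simp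
  show "0 < A p * B p * B p * (if B p > 0 then 1 else 0)" if "p \<in> {0<..1} \<times> {z. K z > 0}" for p
    using ABB_pos_on[of p] B_pos_on[of p] that by (auto simp: mem_Times_iff)
qed

lemma Nn_pos:
  assumes neg: "emeasure lborel {z. K z < 0} > 0"
  shows "Nn > 0"
  unfolding Nn_def
proof (rule integral_pos_on[where E="{0<..1} \<times> {z. K z < 0}"])
  show "integrable M (\<lambda>p. A p * B p * B p * (if B p < 0 then 1 else 0))"
    by (rule int_ABB_if) measurable
  show "0 \<le> A p * B p * B p * (if B p < 0 then 1 else 0)" for p using ABB_nonneg[of p] by simp
  have "{z. K z < 0} \<in> sets borel" by measurable
  then show "{0<..1} \<times> {z. K z < 0} \<in> sets M"
    by (intro pair_measureI) (auto simp: greaterThanAtMost_borel)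
  show "emeasure M ({0<..1} \<times> {z. K z < 0}) > 0"
    using E_measure[of "\<lambda>x. x < 0"] neg by simp
  show "0 < A p * B p * B p * (if B p < 0 then 1 else 0)" if "p \<in> {0<..1} \<times> {z. K z < 0}" for p
    using ABB_pos_on[of p] B_neg_on[of p] that by (auto simp: mem_Times_iff)
qed

lemma ps2_ge_Pp: "u \<ge> 0 \<Longrightarrow> ps2 u \<ge> Pp"
  unfolding ps2_def Pp_def
proof (rule integral_mono)
  assume u: "u \<ge> 0"
  show "integrable M (\<lambda>p. A p * B p * B p * (if B p > 0 then 1 else 0))"
    by (rule int_ABB_if) measurable
  show "integrable M (\<lambda>p. A p * B p * B p * exp (u * B p))" by (rule int_ABB_exp)
  fix p
  show "A p * B p * B p * (if B p > 0 then 1 else 0) \<le> A p * B p * B p * exp (u * B p)"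
  proof (cases "B p > 0")
    case True
    then have "1 \<le> exp (u * B p)" using u by simp
    then have "A p * B p * B p * 1 \<le> A p * B p * B p * exp (u * B p)"
      by (rule mult_left_mono[OF _ ABB_nonneg])
    then show ?thesis using True by simp
  next
    case False
    then show ?thesis using ABB_nonneg[of p] by simp
  qed
qed

lemma ps2_ge_Nn: "u \<le> 0 \<Longrightarrow> ps2 u \<ge> Nn"
  unfolding ps2_def Nn_def
proof (rule integral_mono)
  assume u: "u \<le> 0"
  show "integrable M (\<lambda>p. A p * B p * B p * (if B p < 0 then 1 else 0))"
    by (rule int_ABB_if) measurable
  show "integrable M (\<lambda>p. A p * B p * B p * exp (u * B p))" by (rule int_ABB_exp)
  fix p
  show "A p * B p * B p * (if B p < 0 then 1 else 0) \<le> A p * B p * B p * exp (u * B p)"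
  proof (cases "B p < 0")
    case True
    then have "0 \<le> u * B p" using u by (simp add: mult_nonpos_nonpos)
    then have "1 \<le> exp (u * B p)" by simp
    then have "A p * B p * B p * 1 \<le> A p * B p * B p * exp (u * B p)"
      by (rule mult_left_mono[OF _ ABB_nonneg])
    then show ?thesis using True by simp
  next
    case False
    then show ?thesis using ABB_nonneg[of p] by simp
  qed
qed

lemma ps1_above: "\<exists>u. t \<le> ps1 u"
  by (rule f1_above[OF ps2_ge_Pp Pp_pos])

lemma ps1_below: "emeasure lborel {z. K z < 0} > 0 \<Longrightarrow> \<exists>u. ps1 u \<le> t"
  by (rule f1_below[OF ps2_ge_Nn Nn_pos])

lemma rate_eq: "rate a K = LT (psi a K)"
  by (simp add: fun_eq_iff rate_def LT_def)

lemma ps2_cont: "continuous_on UNIV ps2"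
  using D3 by (meson DERIV_isCont continuous_at_imp_continuous_on)

end

locale kset2 = kset +
  assumes negnull: "emeasure lborel {z. K z < 0} = 0"
begin

lemma AE_K: "AE p in M. 0 \<le> K (snd p)"
proof -
  have "{z. K z < 0} \<in> sets borel" by measurable
  then have "{z. K z < 0} \<in> null_sets lborel" using negnull by (simp add: null_sets_def)
  then have "UNIV \<times> {z. K z < 0} \<in> null_sets M"
    by (intro lborel.times_in_null_sets2) auto
  then have "AE p in M. p \<notin> UNIV \<times> {z. K z < 0}" by (rule AE_not_in)
  then show ?thesis by eventually_elim (auto simp: mem_Times_iff)
qed

lemma AE_B: "AE p in M. 0 \<le> B p"
  using AE_K
proof eventually_elim
  case (elim p)
  then show ?case using bet_lt1 unfolding B_def by (auto intro!: divide_nonneg_pos)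
qed

lemma ps1_nonneg: "0 \<le> ps1 u"
proof -
  have "AE p in M. 0 \<le> A p * B p * exp (u * B p)"
    using AE_B by eventually_elim (intro mult_nonneg_nonneg A_nonneg, auto)
  then show ?thesis unfolding ps1_def by (rule integral_nonneg_AE)
qed

lemma psi_le0: "u \<le> 0 \<Longrightarrow> psi a K u \<le> 0"
proof -
  assume u: "u \<le> 0"
  have "psi a K u + ps1 u * (0 - u) \<le> psi a K 0" by (rule tangent)
  moreover have "0 \<le> ps1 u * (0 - u)" using u ps1_nonneg[of u] by (intro mult_nonneg_nonneg) auto
  ultimately show ?thesis using psi0 by linarith
qed

lemma psi_ge0: "u \<ge> 0 \<Longrightarrow> psi a K u \<ge> 0"
proof -
  assume u: "u \<ge> 0"
  have "psi a K 0 + ps1 0 * (u - 0) \<le> psi a K u" by (rule tangent)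
  moreover have "0 \<le> ps1 0 * (u - 0)" using u ps1_0 bet_lt1 by (intro mult_nonneg_nonneg) auto
  ultimately show ?thesis using psi0 by linarith
qed

lemma rate_neg: assumes t: "t < 0" shows "LT (psi a K) t = \<infinity>"
proof (rule ereal_top)
  fix r :: real
  define u where "u = (\<bar>r\<bar> + 1) / t"
  have u0: "u \<le> 0" using t by (simp add: u_def divide_nonneg_neg add_nonneg_pos)
  have "u * t = \<bar>r\<bar> + 1" using t by (simp add: u_def)
  then have "r \<le> u * t - psi a K u" using psi_le0[OF u0] by linarith
  then have "ereal r \<le> ereal (u * t - psi a K u)" by simp
  also have "\<dots> \<le> LT (psi a K) t" by (rule LT_ge)
  finally show "ereal r \<le> LT (psi a K) t" .
qed

lemma ps1_lim: "(\<lambda>n. ps1 (- real n)) \<longlonglongrightarrow> 0"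
proof -
  have "(\<lambda>n. \<integral>p. A p * B p * exp (- real n * B p) \<partial>M) \<longlonglongrightarrow> (\<integral>p. 0 \<partial>M)"
  proof (rule integral_dominated_convergence[where w="\<lambda>p. \<bar>A p * B p\<bar>"])
    show "(\<lambda>p. 0::real) \<in> borel_measurable M" by simp
    show "(\<lambda>p. A p * B p * exp (- real n * B p)) \<in> borel_measurable M" for n by measurable
    show "integrable M (\<lambda>p. \<bar>A p * B p\<bar>)" using ABi by (rule integrable_abs)
    show "AE p in M. (\<lambda>n. A p * B p * exp (- real n * B p)) \<longlonglongrightarrow> 0"
      using AE_B
    proof eventually_elim
      case (elim p)
      show ?case
      proof (cases "B p = 0")
        case True then show ?thesis by simp
      next
        case False
        then have Bp: "B p > 0" using elim by simp
        have e: "exp (- real n * B p) = exp (- B p) ^ n" for n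
          using exp_of_nat_mult[of n "- B p"] by simp
        have "(\<lambda>n. exp (- B p) ^ n) \<longlonglongrightarrow> 0"
          by (rule LIMSEQ_power_zero) (use Bp in simp)
        then have "(\<lambda>n. A p * B p * exp (- B p) ^ n) \<longlonglongrightarrow> A p * B p * 0"
          by (intro tendsto_mult tendsto_const)
        then show ?thesis unfolding e by simp
      qed
    qed
    show "AE p in M. norm (A p * B p * exp (- real n * B p)) \<le> \<bar>A p * B p\<bar>" for n
      using AE_B
    proof eventually_elim
      case (elim p)
      have "exp (- real n * B p) \<le> 1" using elim by (simp add: mult_nonneg_nonneg)
      then have "\<bar>A p * B p\<bar> * exp (- real n * B p) \<le> \<bar>A p * B p\<bar> * 1"
        by (intro mult_left_mono) auto
      then show ?case by (simp add: abs_mult)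
    qed
  qed
  then show ?thesis unfolding ps1_def by simp
qed

lemma ps1_small: "t > 0 \<Longrightarrow> \<exists>u. ps1 u < t"
proof -
  assume t: "t > 0"
  have "eventually (\<lambda>n. ps1 (- real n) < t) sequentially"
    using ps1_lim t by (rule order_tendstoD(2))
  then obtain n where "ps1 (- real n) < t" by (auto simp: eventually_sequentially)
  then show ?thesis by blast
qed

lemma range_pos: "t > 0 \<Longrightarrow> t \<in> range ps1"
proof -
  assume t: "t > 0"
  obtain u1 where 1: "ps1 u1 < t" using ps1_small[OF t] by blast
  obtain u2 where 2: "t \<le> ps1 u2" using ps1_above by blast
  show ?thesis using in_range[of u1 t u2] 1 2 by simp
qed

end

context kset2 begin

definition G :: "real \<times> 'a \<Rightarrow> real" where
  "G p = indicator ({0..1} \<times> {z. 0 < K z}) p * fst p powr (- bet)"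

lemma G_meas[measurable]: "G \<in> borel_measurable M"
proof -
  have "{z. 0 < K z} \<in> sets borel" by measurable
  then have "{0..1::real} \<times> {z. 0 < K z} \<in> sets M" by (intro pair_measureI) auto
  then show ?thesis unfolding G_def by measurable
qed

lemma G_nonneg: "0 \<le> G p"
  unfolding G_def by simp

lemma G_Bpos: "B p > 0 \<Longrightarrow> G p = A p"
proof -
  assume Bp: "B p > 0"
  then have s: "fst p \<in> {0..1}" unfolding B_def by (cases "fst p \<in> {0..1}") auto
  then have "fst p powr bet * K (snd p) / (1 - bet) > 0" using Bp unfolding B_def by simp
  then have "fst p powr bet * K (snd p) > 0" using bet_lt1 by (simp add: zero_less_divide_iff)
  then have "K (snd p) > 0" using powr_ge_zero[of "fst p" bet] by (simp add: zero_less_mult_iff)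
  then show ?thesis using s unfolding G_def A_def by (simp add: mem_Times_iff)
qed

lemma G_Bzero: "B p = 0 \<Longrightarrow> G p = 0"
proof -
  assume B0: "B p = 0"
  show ?thesis
  proof (cases "p \<in> {0..1} \<times> {z. 0 < K z}")
    case True
    then have "fst p powr bet * K (snd p) / (1 - bet) = 0" using B0 unfolding B_def by (simp add: mem_Times_iff)
    then have "fst p powr bet = 0" using True bet_lt1 by (simp add: mem_Times_iff)
    then have "fst p = 0" by simp
    then show ?thesis unfolding G_def by simp
  next
    case False then show ?thesis unfolding G_def by simp
  qed
qed

lemma powr_integral: "(\<integral>\<^sup>+ s. ennreal (indicator {0..1} s * s powr (- bet)) \<partial>lborel) = ennreal (1 / (1 - bet))"
proof -
  have "((\<lambda>x. x powr (- bet)) has_integral (1 powr (- bet + 1) / (- bet + 1))) {0..1::real}"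
    by (rule has_integral_powr_from_0) (use bet_lt1 in auto)
  then have I: "((\<lambda>x. x powr (- bet)) has_integral (1 / (1 - bet))) {0..1::real}" by simp
  have "integral\<^sup>N lborel (\<lambda>x. indicator {0..1::real} x * x powr (- bet)) = 1 / (1 - bet)"
    by (rule nn_integral_has_integral_lebesgue[OF _ I]) simp
  then show ?thesis by simp
qed

lemma L_val: "(\<integral>\<^sup>+ p. ennreal (G p) \<partial>M) = emeasure lborel {z. 0 < K z} * ennreal (1 / (1 - bet))"
proof -
  have Kset: "{z. 0 < K z} \<in> sets borel" by measurable
  have "(\<integral>\<^sup>+ p. ennreal (G p) \<partial>M) = (\<integral>\<^sup>+ s. (\<integral>\<^sup>+ z. ennreal (G (s, z)) \<partial>lborel) \<partial>lborel)"
    by (rule lborel.nn_integral_fst[symmetric]) measurable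
  also have "\<dots> = (\<integral>\<^sup>+ s. ennreal (indicator {0..1} s * s powr (- bet)) * emeasure lborel {z. 0 < K z} \<partial>lborel)"
  proof (rule nn_integral_cong)
    fix s :: real
    have "(\<lambda>z. ennreal (G (s, z))) = (\<lambda>z. ennreal (indicator {0..1} s * s powr (- bet)) * indicator {z. 0 < K z} z)"
      by (auto simp: G_def fun_eq_iff split: split_indicator)
    then show "(\<integral>\<^sup>+ z. ennreal (G (s, z)) \<partial>lborel) = ennreal (indicator {0..1} s * s powr (- bet)) * emeasure lborel {z. 0 < K z}"
      using Kset by (simp add: nn_integral_cmult_indicator)
  qed
  also have "\<dots> = (\<integral>\<^sup>+ s. ennreal (indicator {0..1} s * s powr (- bet)) \<partial>lborel) * emeasure lborel {z. 0 < K z}"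
    by (rule nn_integral_multc) measurable
  also have "\<dots> = emeasure lborel {z. 0 < K z} * ennreal (1 / (1 - bet))"
    unfolding powr_integral by (simp add: mult.commute)
  finally show ?thesis .
qed

lemma negpsi_nn: "u \<le> 0 \<Longrightarrow> ennreal (- psi a K u) = (\<integral>\<^sup>+ p. ennreal (A p * (1 - exp (u * B p))) \<partial>M)"
proof -
  assume u: "u \<le> 0"
  have i: "integrable M (\<lambda>p. A p * (1 - exp (u * B p)))"
  proof -
    have "integrable M (\<lambda>p. - (A p * (exp (u * B p) - 1)))"
      using integrable_psiF[OF A_meas B_meas B_bound ABi, of u] by (rule integrable_minus)
    then show ?thesis by (simp add: algebra_simps)
  qed
  have nn: "AE p in M. 0 \<le> A p * (1 - exp (u * B p))"
    using AE_B
  proof eventually_elim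
    case (elim p)
    have "u * B p \<le> 0" using u elim by (simp add: mult_nonpos_nonneg)
    then have "0 \<le> 1 - exp (u * B p)" by simp
    then show ?case using A_nonneg[of p] by simp
  qed
  have "(\<integral>\<^sup>+ p. ennreal (A p * (1 - exp (u * B p))) \<partial>M) = ennreal (\<integral>p. A p * (1 - exp (u * B p)) \<partial>M)"
    by (rule nn_integral_eq_integral[OF i nn])
  also have "(\<integral>p. A p * (1 - exp (u * B p)) \<partial>M) = (\<integral>p. - (A p * (exp (u * B p) - 1)) \<partial>M)"
    by (simp add: algebra_simps)
  also have "\<dots> = - psi a K u" unfolding psi_eq by (rule integral_minus)
  finally show ?thesis by simp
qed

lemma LT0_upper: "LT (psi a K) 0 \<le> enn2ereal (\<integral>\<^sup>+ p. ennreal (G p) \<partial>M)"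
  unfolding LT_def
proof (rule SUP_least)
  fix u :: real assume "u \<in> UNIV"
  show "ereal (u * 0 - psi a K u) \<le> enn2ereal (\<integral>\<^sup>+ p. ennreal (G p) \<partial>M)"
  proof (cases "u \<le> 0")
    case True
    have "ennreal (- psi a K u) \<le> (\<integral>\<^sup>+ p. ennreal (G p) \<partial>M)"
      unfolding negpsi_nn[OF True]
    proof (rule nn_integral_mono_AE)
      show "AE p in M. ennreal (A p * (1 - exp (u * B p))) \<le> ennreal (G p)"
        using AE_B
      proof eventually_elim
        case (elim p)
        show ?case
        proof (cases "B p = 0")
          case True then show ?thesis using G_Bzero by simp
        next
          case False
          then have Bp: "B p > 0" using elim by simp
          have "A p * (1 - exp (u * B p)) \<le> A p * 1"
            using A_nonneg[of p] by (intro mult_left_mono) auto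
          then show ?thesis using G_Bpos[OF Bp] by (simp add: ennreal_leI)
        qed
      qed
    qed
    then have "enn2ereal (ennreal (- psi a K u)) \<le> enn2ereal (\<integral>\<^sup>+ p. ennreal (G p) \<partial>M)"
      by (simp add: less_eq_ennreal.rep_eq)
    moreover have "- psi a K u \<ge> 0" using psi_le0[OF True] by simp
    ultimately show ?thesis by simp
  next
    case False
    then have "psi a K u \<ge> 0" using psi_ge0 by simp
    then have "ereal (u * 0 - psi a K u) \<le> 0" by simp
    also have "0 \<le> enn2ereal (\<integral>\<^sup>+ p. ennreal (G p) \<partial>M)" by simp
    finally show ?thesis .
  qed
qed

lemma LT0_lower: "enn2ereal (\<integral>\<^sup>+ p. ennreal (G p) \<partial>M) \<le> LT (psi a K) 0"
proof -
  define f where "f n p = ennreal (A p * (1 - exp (- real n * B p)))" for n p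
  have fm[measurable]: "f n \<in> borel_measurable M" for n unfolding f_def by measurable
  have "(\<integral>\<^sup>+ p. ennreal (G p) \<partial>M) \<le> (\<integral>\<^sup>+ p. (SUP n. f n p) \<partial>M)"
  proof (rule nn_integral_mono_AE)
    show "AE p in M. ennreal (G p) \<le> (SUP n. f n p)"
      using AE_B
    proof eventually_elim
      case (elim p)
      show ?case
      proof (cases "B p = 0")
        case True then show ?thesis using G_Bzero by simp
      next
        case False
        then have Bp: "B p > 0" using elim by simp
        have e: "exp (- real n * B p) = exp (- B p) ^ n" for n
          using exp_of_nat_mult[of n "- B p"] by simp
        have "(\<lambda>n. exp (- B p) ^ n) \<longlonglongrightarrow> 0"
          by (rule LIMSEQ_power_zero) (use Bp in simp)
        then have "(\<lambda>n. A p * (1 - exp (- B p) ^ n)) \<longlonglongrightarrow> A p * (1 - 0)"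
          by (intro tendsto_mult tendsto_diff tendsto_const)
        then have "(\<lambda>n. f n p) \<longlonglongrightarrow> ennreal (A p)"
          unfolding f_def e by (intro tendsto_ennrealI) simp
        moreover have "\<forall>n\<ge>0. f n p \<le> (SUP n. f n p)" by (auto intro: SUP_upper)
        ultimately have "ennreal (A p) \<le> (SUP n. f n p)" by (rule Lim_bounded)
        then show ?thesis using G_Bpos[OF Bp] by simp
      qed
    qed
  qed
  also have "\<dots> = (SUP n. integral\<^sup>N M (f n))"
  proof (rule nn_integral_monotone_convergence_SUP_AE)
    show "AE p in M. f n p \<le> f (Suc n) p" for n
      using AE_B
    proof eventually_elim
      case (elim p)
      have "- real (Suc n) * B p \<le> - real n * B p" using elim by (simp add: algebra_simps)
      then have "exp (- real (Suc n) * B p) \<le> exp (- real n * B p)" by simp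
      then have "A p * (1 - exp (- real n * B p)) \<le> A p * (1 - exp (- real (Suc n) * B p))"
        using A_nonneg[of p] by (intro mult_left_mono) auto
      then show ?case unfolding f_def by (rule ennreal_leI)
    qed
    show "f n \<in> borel_measurable M" for n by (rule fm)
  qed
  also have "\<dots> \<le> e2ennreal (LT (psi a K) 0)"
  proof (rule SUP_least)
    fix n :: nat assume "n \<in> UNIV"
    have "integral\<^sup>N M (f n) = ennreal (- psi a K (- real n))"
      unfolding f_def by (subst negpsi_nn) auto
    also have "\<dots> = e2ennreal (ereal (- real n * 0 - psi a K (- real n)))" by simp
    also have "\<dots> \<le> e2ennreal (LT (psi a K) 0)" by (intro e2ennreal_mono LT_ge)
    finally show "integral\<^sup>N M (f n) \<le> e2ennreal (LT (psi a K) 0)" .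
  qed
  finally have "enn2ereal (\<integral>\<^sup>+ p. ennreal (G p) \<partial>M) \<le> enn2ereal (e2ennreal (LT (psi a K) 0))"
    by (simp add: less_eq_ennreal.rep_eq)
  also have "\<dots> = LT (psi a K) 0" by (rule enn2ereal_e2ennreal[OF LT_nonneg])
  finally show ?thesis .
qed

lemma LT0: "LT (psi a K) 0 = enn2ereal (emeasure lborel {z. K z > 0}) / ereal (1 - bet)"
proof -
  have "LT (psi a K) 0 = enn2ereal (\<integral>\<^sup>+ p. ennreal (G p) \<partial>M)"
    using LT0_upper LT0_lower by (rule antisym)
  also have "\<dots> = enn2ereal (emeasure lborel {z. 0 < K z}) * ereal (1 / (1 - bet))"
    unfolding L_val times_ennreal.rep_eq using bet_lt1 by simp
  also have "\<dots> = enn2ereal (emeasure lborel {z. K z > 0}) / ereal (1 - bet)"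
    using bet_lt1 by (simp add: divide_ereal_def inverse_eq_divide)
  finally show ?thesis .
qed

end

theorem proposition1:
  fixes K :: "'a::euclidean_space \<Rightarrow> real" and a :: real
  defines "d \<equiv> real DIM('a)"
  assumes a_pos: "0 < a" and a_lt: "a < 1 / d"
    and K_bounded: "bounded (range K)"
    and K_int: "integrable lborel K"
    and K_one: "(\<integral>z. K z \<partial>lborel) = 1"
    and K_vanish: "(K \<longlongrightarrow> 0) at_infinity"
  shows
    "((\<forall>u. set_integrable (lborel \<Otimes>\<^sub>M (lborel :: 'a measure)) ({0..1} \<times> UNIV) (psi_integrand a K u))
     \<and> strict_convex_on UNIV (psi a K)
     \<and> (\<forall>u. psi a K differentiable at u)
     \<and> (\<forall>u. deriv (psi a K) differentiable at u)
     \<and> continuous_on UNIV (deriv (deriv (psi a K)))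
     \<and> (\<forall>t. rate a K t \<ge> 0)
     \<and> (\<forall>c::real. compact {t. rate a K t \<le> ereal c}))
    \<and> (emeasure lborel {x. K x < 0} = 0 \<longrightarrow>
       (\<forall>t<0. rate a K t = \<infinity>)
     \<and> rate a K 0 = enn2ereal (emeasure lborel {x. K x > 0}) / ereal (1 - a * d)
     \<and> ereal_strict_convex (rate a K)
     \<and> continuous_on {0<..} (rate a K)
     \<and> (\<forall>t>0. t \<in> range (deriv (psi a K)) \<and>
           rate a K t = ereal (t * inv_into UNIV (deriv (psi a K)) t
                               - psi a K (inv_into UNIV (deriv (psi a K)) t))))
    \<and> (emeasure lborel {x. K x < 0} > 0 \<longrightarrow>
       (\<forall>t. rate a K t < \<infinity>)
     \<and> ereal_strict_convex (rate a K)
     \<and> (\<forall>t. t \<in> range (deriv (psi a K)) \<and>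
           rate a K t = ereal (t * inv_into UNIV (deriv (psi a K)) t
                               - psi a K (inv_into UNIV (deriv (psi a K)) t))))
    \<and> (rate a K (1 / (1 - a * d)) = 0
     \<and> (\<forall>t. t \<noteq> 1 / (1 - a * d) \<longrightarrow> rate a K t > rate a K (1 / (1 - a * d))))"
proof -
  have a_lt': "a < 1 / real DIM('a)" using a_lt by (simp add: d_def)
  interpret kset K a
    by unfold_locales (use a_pos a_lt' K_bounded K_int K_one in auto)
  have bet: "a * d = bet" by (simp add: d_def bet_def)
  have r: "rate a K = LT (psi a K)" by (rule rate_eq)
  have dp: "deriv (psi a K) = ps1" by (rule deriv_f)
  have dp1: "deriv ps1 = ps2" by (rule deriv_f1)
  have part1: "(\<forall>u. set_integrable (lborel \<Otimes>\<^sub>M (lborel :: 'a measure)) ({0..1} \<times> UNIV) (psi_integrand a K u))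
     \<and> strict_convex_on UNIV (psi a K)
     \<and> (\<forall>u. psi a K differentiable at u)
     \<and> (\<forall>u. deriv (psi a K) differentiable at u)
     \<and> continuous_on UNIV (deriv (deriv (psi a K)))
     \<and> (\<forall>t. rate a K t \<ge> 0)
     \<and> (\<forall>c::real. compact {t. rate a K t \<le> ereal c})"
    unfolding r dp dp1
    using psi_set_integrable strict_convex D1 D2 ps2_cont LT_nonneg LT_compact
    by (auto simp: real_differentiable_def)
  have part2: "emeasure lborel {x. K x < 0} = 0 \<longrightarrow>
       (\<forall>t<0. rate a K t = \<infinity>)
     \<and> rate a K 0 = enn2ereal (emeasure lborel {x. K x > 0}) / ereal (1 - a * d)
     \<and> ereal_strict_convex (rate a K)
     \<and> continuous_on {0<..} (rate a K)
     \<and> (\<forall>t>0. t \<in> range (deriv (psi a K)) \<and>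
           rate a K t = ereal (t * inv_into UNIV (deriv (psi a K)) t
                               - psi a K (inv_into UNIV (deriv (psi a K)) t)))"
  proof
    assume neg: "emeasure lborel {x. K x < 0} = 0"
    interpret kset2 K a by unfold_locales (rule neg)
    have fin_nonneg: "x \<ge> 0" if "LT (psi a K) x < \<infinity>" for x
      using rate_neg[of x] that by force
    have H: "\<theta> * x + (1 - \<theta>) * y \<in> range ps1"
      if "LT (psi a K) x < \<infinity>" "LT (psi a K) y < \<infinity>" "x \<noteq> y" "0 < \<theta>" "\<theta> < 1" for x y \<theta>
    proof -
      have x: "x \<ge> 0" and y: "y \<ge> 0" using fin_nonneg that by auto
      have "\<theta> * x \<ge> 0" "(1 - \<theta>) * y \<ge> 0" using x y that by auto
      moreover have "\<theta> * x > 0 \<or> (1 - \<theta>) * y > 0"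
        using x y that by (cases "x = 0") (auto intro: mult_pos_pos)
      ultimately have "\<theta> * x + (1 - \<theta>) * y > 0" by linarith
      then show ?thesis by (rule range_pos)
    qed
    have sub: "{0<..} \<subseteq> range ps1" using range_pos by auto
    show "(\<forall>t<0. rate a K t = \<infinity>)
     \<and> rate a K 0 = enn2ereal (emeasure lborel {x. K x > 0}) / ereal (1 - a * d)
     \<and> ereal_strict_convex (rate a K)
     \<and> continuous_on {0<..} (rate a K)
     \<and> (\<forall>t>0. t \<in> range (deriv (psi a K)) \<and>
           rate a K t = ereal (t * inv_into UNIV (deriv (psi a K)) t
                               - psi a K (inv_into UNIV (deriv (psi a K)) t)))"
      unfolding r dp bet
      using rate_neg LT0 LT_strict_convex[OF H] LT_continuous[OF _ _ sub] range_pos LT_formula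
      by auto
  qed
  have part3: "emeasure lborel {x. K x < 0} > 0 \<longrightarrow>
       (\<forall>t. rate a K t < \<infinity>)
     \<and> ereal_strict_convex (rate a K)
     \<and> (\<forall>t. t \<in> range (deriv (psi a K)) \<and>
           rate a K t = ereal (t * inv_into UNIV (deriv (psi a K)) t
                               - psi a K (inv_into UNIV (deriv (psi a K)) t)))"
  proof
    assume neg: "emeasure lborel {x. K x < 0} > 0"
    have rng: "t \<in> range ps1" for t
    proof -
      obtain u1 where 1: "ps1 u1 \<le> t" using ps1_below[OF neg] by blast
      obtain u2 where 2: "t \<le> ps1 u2" using ps1_above by blast
      show ?thesis using in_range[OF 1 2] .
    qed
    show "(\<forall>t. rate a K t < \<infinity>)
     \<and> ereal_strict_convex (rate a K)
     \<and> (\<forall>t. t \<in> range (deriv (psi a K)) \<and>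
           rate a K t = ereal (t * inv_into UNIV (deriv (psi a K)) t
                               - psi a K (inv_into UNIV (deriv (psi a K)) t)))"
      unfolding r dp
      using LT_strict_convex[OF rng] LT_formula[OF rng] rng by auto
  qed
  have part4: "rate a K (1 / (1 - a * d)) = 0
     \<and> (\<forall>t. t \<noteq> 1 / (1 - a * d) \<longrightarrow> rate a K t > rate a K (1 / (1 - a * d)))"
    unfolding r bet ps1_0[symmetric]
  proof (intro conjI allI impI)
    show "LT (psi a K) (ps1 0) = 0" by (rule LT_min(1))
    fix t assume "t \<noteq> ps1 0"
    then show "LT (psi a K) t > LT (psi a K) (ps1 0)" by (rule LT_min2)
  qed
  show ?thesis using part1 part2 part3 part4 by blast
qed

end
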